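(* If MAPTree is stopped early (by the time budget) after at least one iteration of its main loop, its output is a minimum-cost solution graph among all solution graphs of $\mathcal G_{\mathcal X,\mathcal Y}$ contained in the explored node set $\mathcal G'$.
   Context: Let $x_1,\dots,x_N\in\{0,1\}^F$ be a binary dataset $\mathcal X$ with labels $\mathcal Y\in\{0,1\}^N$, $[N]=\{1,\dots,N\}$. For $\mathcal I\subseteq[N]$, $f\in[F]$, $k\in\{0,1\}$ let $\mathcal I|_{f=k}=\{i\in\mathcal I:(x_i)_f=k\}$, $c^k(\mathcal I)=|\{i\in\mathcal I:y_i=k\}|$, $\mathcal V(\mathcal I)=\{f:\mathcal I|_{f=0}\neq\emptyset\text{ and }\mathcal I|_{f=1}\neq\emptyset\}$. Fix $\rho^1,\rho^0>0$, $\alpha\in(0,1)$, $\beta\ge0$; $\ell_{\rm leaf}(c^1,c^0)=B(c^1+\rho^1,c^0+\rho^0)/B(\rho^1,\rho^0)$ ($B$ the Beta function), $p_{\rm split}(d)=\alpha(1+d)^{-\beta}$, $p_{\rm leaf}(d,\mathcal I)=1$ if $\mathcal V(\mathcal I)=\emptyset$ else $1-p_{\rm split}(d)$, $p_{\rm inner}(d,\mathcal I)=0$ if $\mathcal V(\mathcal I)=\emptyset$ else $p_{\rm split}(d)/|\mathcal V(\mathcal I)|$; $-\log0=+\infty$, and a minimum over an empty set is $+\infty$. Graph $\mathcal G=\mathcal G_{\mathcal X,\mathcal Y}$: for nonempty $\mathcal I\subseteq[N]$, $d\in\{0,\dots,F\}$, an OR node $o_{\mathcal I,d}$ with terminal child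 $t_{\mathcal I,d}$ (edge cost $-\log p_{\rm leaf}(d,\mathcal I)-\log\ell_{\rm leaf}(c^1(\mathcal I),c^0(\mathcal I))$); for $d<F$, $f\in\mathcal V(\mathcal I)$, an AND child $a_{\mathcal I,d,f}$ (edge cost $-\log p_{\rm inner}(d,\mathcal I)$) with cost-$0$ edges to $o_{\mathcal I|_{f=0},d+1}$, $o_{\mathcal I|_{f=1},d+1}$; root $r=o_{[N],0}$; only nodes reachable from $r$ kept. A solution graph is a node set $\mathcal S\ni r$, all of whose nodes are reachable from $r$ inside $\mathcal S$, with every AND node of $\mathcal S$ having both children in $\mathcal S$ and every OR node of $\mathcal S$ exactly one child in $\mathcal S$; its cost is the sum of costs of edges $u\to v$ with $u,v\in\mathcal S$. Heuristic: $h(o_{\mathcal I,d})=-\max\{\log\ell_{\rm leaf}(c^1(\mathcal I),c^0(\mathcal I)),\log p_{\rm split}(d)+\log\ell_{\rm leaf}(c^1(\mathcal I),0)+\log\ell_{\rm leaf}(0,c^0(\mathcal I))\}$. MAPTree maintains a node set $\mathcal G'$, a set $\mathcal E$ of expanded OR nodes, and values $LB[u],UB[u]\in\mathbb R\cup\{+\infty\}$ for OR nodes ($UB[u]=+\infty$ until set); for an AND node $a$ with children $o_0,o_1$, $LB[a]=LB[o_0]+LB[o_1]$ and $UB[a]=UB[o_0]+UB[o_1]$. Initialize $\mathcal G'=\{r\}$, $\mathcal E=\emptyset$, $LB[r]=h(r)$, $UB[r]=+\infty$. While $LB[r]<UB[r]$ and time remains: (1) $o:=r$; while $o\in\mathcal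 E$, choose an AND child $a^*$ of $o$ minimizing $\mathrm{cost}(o,a)+LB[a]$, with children $o_0$ (value-0 side) and $o_1$, and set $o:=o_0$ if $UB[o_0]-LB[o_0]>UB[o_1]-LB[o_1]$, else $o:=o_1$. (2) Add $o$ to $\mathcal E$ and its terminal child to $\mathcal G'$; for each AND child $a$ of $o$ with children $o_0,o_1$, add $a,o_0,o_1$ to $\mathcal G'$ and set $LB[o_0]:=h(o_0)$, $LB[o_1]:=h(o_1)$. (3) Starting from $Q=\{o\}$, repeatedly remove from $Q$ an OR node $u$ of maximal depth, compute $v=\min\{\min_a(\mathrm{cost}(u,a)+LB[a]),\mathrm{cost}(u,t_u)\}$ over the AND children $a$ and terminal child $t_u$ of $u$; if $v>LB[u]$, set $LB[u]:=v$ and add to $Q$ every OR node of $\mathcal G'$ that is the parent of an AND node of $\mathcal G'$ having $u$ as child. (4) The same with $UB$ in place of $LB$, updating when $v<UB[u]$. Output $\mathrm{getSolution}(r)$, where for an OR node $u$ with terminal child $t$: if $u$ has no AND child or $\mathrm{cost}(u,t)\le\min_a(\mathrm{cost}(u,a)+UB[a])$, return $\{u,t\}$; else, with $a^*$ attaining the minimum and children $u_0,u_1$, return $\{u,a^*\}\cup\mathrm{getSolution}(u_0)\cup\mathrm{getSolution}(u_1)$. *)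

theory Defs
  imports "HOL-Analysis.Analysis" "HOL-Library.Extended_Real"
begin

text \<open>Samples are indexed by 1..N, features by 1..F; binary values {0,1} are
  represented by False/True (value k corresponds to k = 1).\<close>

record mt_data =
  nN :: nat
  fF :: nat
  xX :: "nat \<Rightarrow> nat \<Rightarrow> bool"
  yY :: "nat \<Rightarrow> bool"
  rho1 :: real
  rho0 :: real
  alpha :: real
  beta :: real

definition restr :: "mt_data \<Rightarrow> nat set \<Rightarrow> nat \<Rightarrow> bool \<Rightarrow> nat set" where
  "restr D I f k = {i \<in> I. xX D i f = k}"

definition cnt :: "mt_data \<Rightarrow> nat set \<Rightarrow> bool \<Rightarrow> nat" where
  "cnt D I k = card {i \<in> I. yY D i = k}"

definition valid_feats :: "mt_data \<Rightarrow> nat set \<Rightarrow> nat set" where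
  "valid_feats D I = {f \<in> {1..fF D}. restr D I f False \<noteq> {} \<and> restr D I f True \<noteq> {}}"

definition l_leaf :: "mt_data \<Rightarrow> nat \<Rightarrow> nat \<Rightarrow> real" where
  "l_leaf D c1 c0 = Beta (real c1 + rho1 D) (real c0 + rho0 D) / Beta (rho1 D) (rho0 D)"

definition p_split :: "mt_data \<Rightarrow> nat \<Rightarrow> real" where
  "p_split D d = alpha D * (1 + real d) powr (- beta D)"

definition p_leaf :: "mt_data \<Rightarrow> nat \<Rightarrow> nat set \<Rightarrow> real" where
  "p_leaf D d I = (if valid_feats D I = {} then 1 else 1 - p_split D d)"

definition p_inner :: "mt_data \<Rightarrow> nat \<Rightarrow> nat set \<Rightarrow> real" where
  "p_inner D d I = (if valid_feats D I = {} then 0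
                    else p_split D d / real (card (valid_feats D I)))"

definition neglog :: "real \<Rightarrow> ereal" where
  "neglog p = (if p = 0 then \<infinity> else ereal (- ln p))"

datatype node = OrN "nat set" nat | TermN "nat set" nat | AndN "nat set" nat nat

fun is_or :: "node \<Rightarrow> bool" where
  "is_or (OrN _ _) = True" | "is_or _ = False"

fun is_and :: "node \<Rightarrow> bool" where
  "is_and (AndN _ _ _) = True" | "is_and _ = False"

fun depth :: "node \<Rightarrow> nat" where
  "depth (OrN _ d) = d" | "depth (TermN _ d) = d" | "depth (AndN _ d _) = d"

fun termch :: "node \<Rightarrow> node" where
  "termch (OrN I d) = TermN I d" | "termch u = u"

fun kid0 :: "mt_data \<Rightarrow> node \<Rightarrow> node" where
  "kid0 D (AndN I d f) = OrN (restr D I f False) (Suc d)" | "kid0 D u = u"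

fun kid1 :: "mt_data \<Rightarrow> node \<Rightarrow> node" where
  "kid1 D (AndN I d f) = OrN (restr D I f True) (Suc d)" | "kid1 D u = u"

text \<open>Edges of the (unrestricted) graph; only nodes reachable from the root are kept.\<close>
inductive gedge :: "mt_data \<Rightarrow> node \<Rightarrow> node \<Rightarrow> bool" for D where
  to_term: "I \<noteq> {} \<Longrightarrow> d \<le> fF D \<Longrightarrow> gedge D (OrN I d) (TermN I d)"
| to_and: "I \<noteq> {} \<Longrightarrow> d < fF D \<Longrightarrow> f \<in> valid_feats D I \<Longrightarrow> gedge D (OrN I d) (AndN I d f)"
| to_kid0: "I \<noteq> {} \<Longrightarrow> d < fF D \<Longrightarrow> f \<in> valid_feats D I \<Longrightarrow>
     gedge D (AndN I d f) (OrN (restr D I f False) (Suc d))"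
| to_kid1: "I \<noteq> {} \<Longrightarrow> d < fF D \<Longrightarrow> f \<in> valid_feats D I \<Longrightarrow>
     gedge D (AndN I d f) (OrN (restr D I f True) (Suc d))"

definition root :: "mt_data \<Rightarrow> node" where
  "root D = OrN {1..nN D} 0"

definition nodes :: "mt_data \<Rightarrow> node set" where
  "nodes D = {v. (gedge D)\<^sup>*\<^sup>* (root D) v}"

definition edgeG :: "mt_data \<Rightarrow> node \<Rightarrow> node \<Rightarrow> bool" where
  "edgeG D u v \<longleftrightarrow> u \<in> nodes D \<and> gedge D u v"

fun cost :: "mt_data \<Rightarrow> node \<Rightarrow> node \<Rightarrow> ereal" where
  "cost D (OrN I d) (TermN _ _) =
     neglog (p_leaf D d I) + neglog (l_leaf D (cnt D I True) (cnt D I False))"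
| "cost D (OrN I d) (AndN _ _ _) = neglog (p_inner D d I)"
| "cost D _ _ = 0"

fun hh :: "mt_data \<Rightarrow> node \<Rightarrow> ereal" where
  "hh D (OrN I d) = ereal (- max (ln (l_leaf D (cnt D I True) (cnt D I False)))
       (ln (p_split D d) + ln (l_leaf D (cnt D I True) 0) + ln (l_leaf D 0 (cnt D I False))))"
| "hh D _ = 0"

definition sol_graph :: "mt_data \<Rightarrow> node set \<Rightarrow> bool" where
  "sol_graph D S \<longleftrightarrow> root D \<in> S \<and> S \<subseteq> nodes D
     \<and> (\<forall>v\<in>S. (\<lambda>x y. edgeG D x y \<and> x \<in> S \<and> y \<in> S)\<^sup>*\<^sup>* (root D) v)
     \<and> (\<forall>a\<in>S. is_and a \<longrightarrow> (\<forall>v. edgeG D a v \<longrightarrow> v \<in> S))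
     \<and> (\<forall>u\<in>S. is_or u \<longrightarrow> (\<exists>!v. edgeG D u v \<and> v \<in> S))"

definition sol_cost :: "mt_data \<Rightarrow> node set \<Rightarrow> ereal" where
  "sol_cost D S = (\<Sum>(u, v) \<in> {(u, v). u \<in> S \<and> v \<in> S \<and> edgeG D u v}. cost D u v)"

record mt_state =
  Gp :: "node set"
  Ex :: "node set"
  LB :: "node \<Rightarrow> ereal"
  UB :: "node \<Rightarrow> ereal"

definition andch :: "mt_data \<Rightarrow> node set \<Rightarrow> node \<Rightarrow> node set" where
  "andch D G' u = {a \<in> G'. edgeG D u a \<and> is_and a}"

definition andval :: "mt_data \<Rightarrow> (node \<Rightarrow> ereal) \<Rightarrow> node \<Rightarrow> ereal" where
  "andval D B a = B (kid0 D a) + B (kid1 D a)"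

definition val :: "mt_data \<Rightarrow> node set \<Rightarrow> (node \<Rightarrow> ereal) \<Rightarrow> node \<Rightarrow> ereal" where
  "val D G' B u = min (INF a\<in>andch D G' u. cost D u a + andval D B a) (cost D u (termch u))"

definition parents :: "mt_data \<Rightarrow> node set \<Rightarrow> node \<Rightarrow> node set" where
  "parents D G' u = {p \<in> G'. is_or p \<and> (\<exists>a\<in>G'. is_and a \<and> edgeG D p a \<and> edgeG D a u)}"

text \<open>One step of the queue-processing loop of steps (3)/(4); better is
  (>) for LB and (<) for UB.\<close>
inductive prop_step :: "mt_data \<Rightarrow> (ereal \<Rightarrow> ereal \<Rightarrow> bool) \<Rightarrow> node set
    \<Rightarrow> node set \<times> (node \<Rightarrow> ereal) \<Rightarrow> node set \<times> (node \<Rightarrow> ereal) \<Rightarrow> bool"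
  for D better G' where
  upd: "u \<in> Q \<Longrightarrow> (\<forall>w\<in>Q. depth w \<le> depth u) \<Longrightarrow> better (val D G' B u) (B u) \<Longrightarrow>
     prop_step D better G' (Q, B) (Q - {u} \<union> parents D G' u, B(u := val D G' B u))"
| noupd: "u \<in> Q \<Longrightarrow> (\<forall>w\<in>Q. depth w \<le> depth u) \<Longrightarrow> \<not> better (val D G' B u) (B u) \<Longrightarrow>
     prop_step D better G' (Q, B) (Q - {u}, B)"

definition propagate :: "mt_data \<Rightarrow> (ereal \<Rightarrow> ereal \<Rightarrow> bool) \<Rightarrow> node set \<Rightarrow> node
    \<Rightarrow> (node \<Rightarrow> ereal) \<Rightarrow> (node \<Rightarrow> ereal) \<Rightarrow> bool" where
  "propagate D better G' x B B' \<longleftrightarrow> (prop_step D better G')\<^sup>*\<^sup>* ({x}, B) ({}, B')"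

text \<open>Step (1): descent from u to an unexpanded OR node o.\<close>
inductive descend :: "mt_data \<Rightarrow> mt_state \<Rightarrow> node \<Rightarrow> node \<Rightarrow> bool" for D st where
  stop: "u \<notin> Ex st \<Longrightarrow> descend D st u u"
| go: "u \<in> Ex st \<Longrightarrow> a \<in> andch D (Gp st) u \<Longrightarrow>
     (\<forall>a'\<in>andch D (Gp st) u. cost D u a + andval D (LB st) a \<le> cost D u a' + andval D (LB st) a') \<Longrightarrow>
     descend D st (if UB st (kid0 D a) - LB st (kid0 D a) > UB st (kid1 D a) - LB st (kid1 D a)
                   then kid0 D a else kid1 D a) x \<Longrightarrow>
     descend D st u x"

definition new_G :: "mt_data \<Rightarrow> mt_state \<Rightarrow> node \<Rightarrow> node set" where
  "new_G D st x = Gp st \<union> {termch x}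
     \<union> (\<Union>a\<in>{a. edgeG D x a \<and> is_and a}. {a, kid0 D a, kid1 D a})"

definition new_LB :: "mt_data \<Rightarrow> mt_state \<Rightarrow> node \<Rightarrow> node \<Rightarrow> ereal" where
  "new_LB D st x = (\<lambda>w. if \<exists>a. edgeG D x a \<and> is_and a \<and> (w = kid0 D a \<or> w = kid1 D a)
                         then hh D w else LB st w)"

definition mt_iter :: "mt_data \<Rightarrow> mt_state \<Rightarrow> mt_state \<Rightarrow> bool" where
  "mt_iter D st st' \<longleftrightarrow> LB st (root D) < UB st (root D) \<and>
     (\<exists>x LB2 UB2. descend D st (root D) x
        \<and> propagate D (\<lambda>v b. b < v) (new_G D st x) x (new_LB D st x) LB2
        \<and> propagate D (\<lambda>v b. v < b) (new_G D st x) x (UB st) UB2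
        \<and> st' = \<lparr>Gp = new_G D st x, Ex = Ex st \<union> {x}, LB = LB2, UB = UB2\<rparr>)"

definition mt_init :: "mt_data \<Rightarrow> mt_state" where
  "mt_init D = \<lparr>Gp = {root D}, Ex = {}, LB = (\<lambda>_. 0)(root D := hh D (root D)), UB = (\<lambda>_. \<infinity>)\<rparr>"

text \<open>getSolution; ties among minimizing AND children are broken by a fixed choice
  function ch.\<close>
definition good_choice :: "mt_data \<Rightarrow> mt_state \<Rightarrow> (node \<Rightarrow> node) \<Rightarrow> bool" where
  "good_choice D st ch \<longleftrightarrow> (\<forall>u. andch D (Gp st) u \<noteq> {} \<longrightarrow>
     ch u \<in> andch D (Gp st) u \<and>
     (\<forall>a\<in>andch D (Gp st) u. cost D u (ch u) + andval D (UB st) (ch u) \<le> cost D u a + andval D (UB st) a))"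

inductive getsol :: "mt_data \<Rightarrow> mt_state \<Rightarrow> (node \<Rightarrow> node) \<Rightarrow> node \<Rightarrow> node set \<Rightarrow> bool"
  for D st ch where
  leaf: "andch D (Gp st) u = {} \<or>
     cost D u (termch u) \<le> (INF a\<in>andch D (Gp st) u. cost D u a + andval D (UB st) a) \<Longrightarrow>
     getsol D st ch u {u, termch u}"
| inner: "andch D (Gp st) u \<noteq> {} \<Longrightarrow>
     \<not> cost D u (termch u) \<le> (INF a\<in>andch D (Gp st) u. cost D u a + andval D (UB st) a) \<Longrightarrow>
     getsol D st ch (kid0 D (ch u)) S0 \<Longrightarrow> getsol D st ch (kid1 D (ch u)) S1 \<Longrightarrow>
     getsol D st ch u ({u, ch u} \<union> S0 \<union> S1)"

end

theory Submission
  imports Defs begin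

fun Iset :: "node \<Rightarrow> nat set" where
  "Iset (OrN I d) = I" | "Iset (TermN I d) = I" | "Iset (AndN I d f) = I"

fun parN :: "node \<Rightarrow> node" where
  "parN (TermN I d) = OrN I d" | "parN (AndN I d f) = OrN I d" | "parN (OrN I d) = OrN I d"

fun wfn :: "mt_data \<Rightarrow> node \<Rightarrow> bool" where
  "wfn D (OrN I d) = (I \<noteq> {} \<and> I \<subseteq> {1..nN D} \<and> d \<le> fF D)"
| "wfn D (TermN I d) = (I \<noteq> {} \<and> I \<subseteq> {1..nN D} \<and> d \<le> fF D)"
| "wfn D (AndN I d f) = (I \<noteq> {} \<and> I \<subseteq> {1..nN D} \<and> d < fF D \<and> f \<in> valid_feats D I)"

lemma gedge_wfn: "gedge D u v \<Longrightarrow> wfn D u \<Longrightarrow> wfn D v"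
  by (induction rule: gedge.induct) (auto simp: restr_def valid_feats_def)

lemma nodes_wfn: assumes "0 < nN D" "v \<in> nodes D" shows "wfn D v"
proof -
  have "(gedge D)\<^sup>*\<^sup>* (root D) v" using assms(2) by (simp add: nodes_def)
  then show ?thesis
  proof (induction rule: rtranclp_induct)
    case base then show ?case using assms(1) by (auto simp: root_def)
  next
    case (step y z) then show ?case using gedge_wfn by blast
  qed
qed

lemma finite_wfn: "finite {v. wfn D v}"
proof -
  let ?A = "(\<lambda>(I,d). OrN I d) ` (Pow {1..nN D} \<times> {..fF D}) \<union> (\<lambda>(I,d). TermN I d) ` (Pow {1..nN D} \<times> {..fF D})
     \<union> (\<lambda>(I,d,f). AndN I d f) ` (Pow {1..nN D} \<times> {..fF D} \<times> {..fF D})"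
  have "{v. wfn D v} \<subseteq> ?A"
  proof
    fix v assume "v \<in> {v. wfn D v}"
    then have w: "wfn D v" by simp
    show "v \<in> ?A"
    proof (cases v)
      case (OrN I d)
      then have "v = (\<lambda>(I,d). OrN I d) (I,d)" "(I,d) \<in> Pow {1..nN D} \<times> {..fF D}" using w by auto
      then show ?thesis by blast
    next
      case (TermN I d)
      then have "v = (\<lambda>(I,d). TermN I d) (I,d)" "(I,d) \<in> Pow {1..nN D} \<times> {..fF D}" using w by auto
      then show ?thesis by blast
    next
      case (AndN I d f)
      then have "f \<le> fF D" using w by (auto simp: valid_feats_def)
      then have "v = (\<lambda>(I,d,f). AndN I d f) (I,d,f)" "(I,d,f) \<in> Pow {1..nN D} \<times> {..fF D} \<times> {..fF D}"
        using w AndN by auto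
      then show ?thesis by blast
    qed
  qed
  moreover have "finite ?A" by auto
  ultimately show ?thesis by (rule finite_subset)
qed

lemma finite_nodes: "0 < nN D \<Longrightarrow> finite (nodes D)"
  by (rule finite_subset[OF _ finite_wfn]) (auto dest: nodes_wfn)

lemma edgeG_nodes: "edgeG D u v \<Longrightarrow> v \<in> nodes D"
  by (auto simp: edgeG_def nodes_def intro: rtranclp.rtrancl_into_rtrancl)

lemma edgeG_src: "edgeG D u v \<Longrightarrow> u \<in> nodes D"
  by (auto simp: edgeG_def)

lemma gedge_or_target: "gedge D u v \<Longrightarrow> is_or v \<Longrightarrow> is_and u \<and> (v = kid0 D u \<or> v = kid1 D u) \<and> depth v = Suc (depth u)"
  by (cases rule: gedge.cases) auto

lemma gedge_nonor_target: "gedge D u v \<Longrightarrow> \<not> is_or v \<Longrightarrow> u = parN v \<and> is_or u \<and> depth v = depth u"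
  by (cases rule: gedge.cases) auto

lemma gedge_mono: "gedge D u v \<Longrightarrow> depth u \<le> depth v \<and> Iset v \<subseteq> Iset u"
  by (cases rule: gedge.cases) (auto simp: restr_def)

lemma gedge_from_and: "gedge D a v \<Longrightarrow> is_and a \<Longrightarrow> v = kid0 D a \<or> v = kid1 D a"
  by (cases rule: gedge.cases) auto

lemma gedge_from_term: "\<not> gedge D (TermN I d) v"
  by (auto elim: gedge.cases)

lemma gedge_or_source: "gedge D u v \<Longrightarrow> is_or u \<Longrightarrow> \<not> is_or v \<and> depth v = depth u"
  by (cases rule: gedge.cases) auto

lemma gedge_term: "gedge D u v \<Longrightarrow> is_or u \<Longrightarrow> \<not> is_and v \<Longrightarrow> v = termch u"
  by (cases rule: gedge.cases) auto

lemma gedge_and_kids: assumes "gedge D u a" "is_and a" shows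
   "gedge D a (kid0 D a) \<and> gedge D a (kid1 D a) \<and> Iset (kid0 D a) \<inter> Iset (kid1 D a) = {}
   \<and> depth (kid0 D a) = Suc (depth a) \<and> depth (kid1 D a) = Suc (depth a) \<and> is_or (kid0 D a) \<and> is_or (kid1 D a)
   \<and> depth a = depth u \<and> u = parN a"
  using assms(1)
proof (cases rule: gedge.cases)
  case (to_and I d f)
  have "restr D I f False \<inter> restr D I f True = {}" by (auto simp: restr_def)
  moreover have "gedge D (AndN I d f) (OrN (restr D I f False) (Suc d))"
    by (rule gedge.to_kid0) (use to_and in auto)
  moreover have "gedge D (AndN I d f) (OrN (restr D I f True) (Suc d))"
    by (rule gedge.to_kid1) (use to_and in auto)
  ultimately show ?thesis unfolding to_and(1,2) by simp
qed (use assms(2) in simp_all)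

lemma edgeG_and_kids: "edgeG D u a \<Longrightarrow> is_and a \<Longrightarrow> edgeG D a (kid0 D a) \<and> edgeG D a (kid1 D a)"
proof -
  assume h: "edgeG D u a" "is_and a"
  have "a \<in> nodes D" using h(1) by (rule edgeG_nodes)
  moreover have "gedge D u a" using h(1) by (simp add: edgeG_def)
  ultimately show ?thesis using gedge_and_kids[of D u a] h(2) by (simp add: edgeG_def)
qed

lemma cost_and: "is_and a \<Longrightarrow> cost D a v = 0"
  by (cases a) auto

lemma or_termch_edge: "0 < nN D \<Longrightarrow> u \<in> nodes D \<Longrightarrow> is_or u \<Longrightarrow> edgeG D u (termch u)"
  using nodes_wfn[of D u] by (cases u) (auto simp: edgeG_def intro: gedge.intros)


lemma wfn_Iset: "wfn D v \<Longrightarrow> Iset v \<noteq> {}"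
  by (cases v) auto

lemma nodes_Iset: "0 < nN D \<Longrightarrow> v \<in> nodes D \<Longrightarrow> Iset v \<noteq> {}"
  using nodes_wfn wfn_Iset by blast

definition sol_at :: "mt_data \<Rightarrow> node set \<Rightarrow> node \<Rightarrow> node set \<Rightarrow> bool" where
  "sol_at D G u T \<longleftrightarrow> u \<in> T \<and> T \<subseteq> G \<and> T \<subseteq> nodes D
     \<and> (\<forall>v\<in>T. (\<lambda>x y. edgeG D x y \<and> x \<in> T \<and> y \<in> T)\<^sup>*\<^sup>* u v)
     \<and> (\<forall>a\<in>T. is_and a \<longrightarrow> (\<forall>v. edgeG D a v \<longrightarrow> v \<in> T))
     \<and> (\<forall>w\<in>T. is_or w \<longrightarrow> (\<exists>!v. edgeG D w v \<and> v \<in> T))"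

definition Eset :: "mt_data \<Rightarrow> node set \<Rightarrow> (node \<times> node) set" where
  "Eset D T = {(x, y). x \<in> T \<and> y \<in> T \<and> edgeG D x y}"

lemma sol_cost_Eset: "sol_cost D T = (\<Sum>(x, y)\<in>Eset D T. cost D x y)"
  by (simp add: sol_cost_def Eset_def)

lemma finite_Eset: "0 < nN D \<Longrightarrow> T \<subseteq> nodes D \<Longrightarrow> finite (Eset D T)"
proof -
  assume "0 < nN D" "T \<subseteq> nodes D"
  then have "finite T" using finite_nodes finite_subset by blast
  moreover have "Eset D T \<subseteq> T \<times> T" by (auto simp: Eset_def)
  ultimately show ?thesis using finite_subset by blast
qed

lemma reach_mono: "(\<lambda>x y. edgeG D x y \<and> x \<in> T \<and> y \<in> T)\<^sup>*\<^sup>* u v \<Longrightarrow> depth u \<le> depth v \<and> Iset v \<subseteq> Iset u"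
proof (induction rule: rtranclp_induct)
  case base then show ?case by simp
next
  case (step y z)
  then have "gedge D y z" by (simp add: edgeG_def)
  then show ?case using step gedge_mono by fastforce
qed

lemma sol_at_in: "sol_at D G u T \<Longrightarrow> u \<in> T" by (simp add: sol_at_def)
lemma sol_at_subG: "sol_at D G u T \<Longrightarrow> T \<subseteq> G" by (simp add: sol_at_def)
lemma sol_at_nodes: "sol_at D G u T \<Longrightarrow> T \<subseteq> nodes D" by (simp add: sol_at_def)
lemma sol_at_reach: "sol_at D G u T \<Longrightarrow> v \<in> T \<Longrightarrow> (\<lambda>x y. edgeG D x y \<and> x \<in> T \<and> y \<in> T)\<^sup>*\<^sup>* u v"
  by (simp add: sol_at_def)
lemma sol_at_and: "sol_at D G u T \<Longrightarrow> b \<in> T \<Longrightarrow> is_and b \<Longrightarrow> edgeG D b v \<Longrightarrow> v \<in> T"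
  by (simp add: sol_at_def)
lemma sol_at_or: "sol_at D G u T \<Longrightarrow> w \<in> T \<Longrightarrow> is_or w \<Longrightarrow> \<exists>!v. edgeG D w v \<and> v \<in> T"
  by (simp add: sol_at_def)
lemma sol_atI:
  assumes "u \<in> T" "T \<subseteq> G" "T \<subseteq> nodes D" "\<And>v. v \<in> T \<Longrightarrow> (\<lambda>x y. edgeG D x y \<and> x \<in> T \<and> y \<in> T)\<^sup>*\<^sup>* u v"
    "\<And>b v. b \<in> T \<Longrightarrow> is_and b \<Longrightarrow> edgeG D b v \<Longrightarrow> v \<in> T"
    "\<And>w. w \<in> T \<Longrightarrow> is_or w \<Longrightarrow> \<exists>!v. edgeG D w v \<and> v \<in> T"
  shows "sol_at D G u T"
  using assms unfolding sol_at_def by blast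

lemma sol_at_below: "sol_at D G u T \<Longrightarrow> v \<in> T \<Longrightarrow> depth u \<le> depth v \<and> Iset v \<subseteq> Iset u"
  unfolding sol_at_def using reach_mono by blast

lemma sol_at_par:
  assumes "sol_at D G u T" "is_or u" "y \<in> T" "\<not> is_or y"
  shows "parN y \<in> T"
proof -
  have r: "(\<lambda>x y. edgeG D x y \<and> x \<in> T \<and> y \<in> T)\<^sup>*\<^sup>* u y" using assms(1,3) by (simp add: sol_at_def)
  have "u \<noteq> y" using assms by auto
  with r obtain c where "edgeG D c y" "c \<in> T"
    by (cases rule: rtranclp.cases) auto
  then show ?thesis using gedge_nonor_target[of D c y] assms(4) by (auto simp: edgeG_def)
qed

lemma no_edge_to_self_or: "is_or u \<Longrightarrow> \<not> gedge D u u"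
  using gedge_or_source by blast

context
  fixes D G u a S0 S1
  assumes n: "0 < nN D" and ua: "edgeG D u a" and aa: "is_and a"
    and s0: "sol_at D G (kid0 D a) S0" and s1: "sol_at D G (kid1 D a) S1"
begin

lemma dc_basic:
  shows "gedge D u a" "is_or u" "depth a = depth u" "u = parN a"
    "edgeG D a (kid0 D a)" "edgeG D a (kid1 D a)"
    "is_or (kid0 D a)" "is_or (kid1 D a)"
    "depth (kid0 D a) = Suc (depth u)" "depth (kid1 D a) = Suc (depth u)"
    "Iset (kid0 D a) \<inter> Iset (kid1 D a) = {}"
    "u \<in> nodes D" "a \<in> nodes D"
proof -
  show g: "gedge D u a" using ua by (simp add: edgeG_def)
  have na: "\<not> is_or a" using aa by (cases a) auto
  show "is_or u" using gedge_nonor_target[OF g na] by blast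
  show "u = parN a" using gedge_nonor_target[OF g na] by simp
  show "depth a = depth u" using gedge_nonor_target[OF g na] by simp
  show "edgeG D a (kid0 D a)" "edgeG D a (kid1 D a)" using edgeG_and_kids[OF ua aa] by auto
  show "is_or (kid0 D a)" "is_or (kid1 D a)" "Iset (kid0 D a) \<inter> Iset (kid1 D a) = {}"
    using gedge_and_kids[OF g aa] by auto
  show "depth (kid0 D a) = Suc (depth u)" "depth (kid1 D a) = Suc (depth u)"
    using gedge_and_kids[OF g aa] gedge_nonor_target[OF g na] by auto
  show "u \<in> nodes D" using ua by (rule edgeG_src)
  show "a \<in> nodes D" using ua by (rule edgeG_nodes)
qed

lemma dc_disj: "S0 \<inter> S1 = {}"
proof (rule ccontr)
  assume "S0 \<inter> S1 \<noteq> {}"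
  then obtain v where v: "v \<in> S0" "v \<in> S1" by blast
  have "Iset v \<subseteq> Iset (kid0 D a)" "Iset v \<subseteq> Iset (kid1 D a)"
    using sol_at_below[OF s0 v(1)] sol_at_below[OF s1 v(2)] by auto
  then have "Iset v = {}" using dc_basic(11) by blast
  moreover have "v \<in> nodes D" using s0 v(1) by (auto simp: sol_at_def)
  ultimately show False using nodes_Iset[OF n] by blast
qed

lemma dc_depth0: "v \<in> S0 \<Longrightarrow> Suc (depth u) \<le> depth v"
  using sol_at_below[OF s0] dc_basic(9) by fastforce

lemma dc_depth1: "v \<in> S1 \<Longrightarrow> Suc (depth u) \<le> depth v"
  using sol_at_below[OF s1] dc_basic(10) by fastforce

lemma dc_notin: "u \<notin> S0" "u \<notin> S1" "a \<notin> S0" "a \<notin> S1"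
  using dc_depth0 dc_depth1 dc_basic(3) by fastforce+

lemma dc_stay0: assumes "x \<in> S0" "edgeG D x y" "y \<in> {u, a} \<union> S0 \<union> S1" shows "y \<in> S0"
proof -
  have g: "gedge D x y" using assms(2) by (simp add: edgeG_def)
  have "depth x \<le> depth y" using gedge_mono[OF g] by simp
  then have "Suc (depth u) \<le> depth y" using dc_depth0[OF assms(1)] by simp
  then have "y \<noteq> u" "y \<noteq> a" using dc_basic(3) by auto
  then have y: "y \<in> S0 \<or> y \<in> S1" using assms(3) by auto
  show ?thesis
  proof (cases "is_or y")
    case True
    then have "is_and x" using gedge_or_target[OF g] by simp
    then show ?thesis using s0 assms(1,2) by (auto simp: sol_at_def)
  next
    case False
    show ?thesis
    proof (rule ccontr)
      assume "y \<notin> S0"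
      then have "y \<in> S1" using y by simp
      then have "parN y \<in> S1" using sol_at_par[OF s1 dc_basic(8)] False by simp
      moreover have "x = parN y" using gedge_nonor_target[OF g False] by simp
      ultimately show False using dc_disj assms(1) by blast
    qed
  qed
qed

lemma dc_stay1: assumes "x \<in> S1" "edgeG D x y" "y \<in> {u, a} \<union> S0 \<union> S1" shows "y \<in> S1"
proof -
  have g: "gedge D x y" using assms(2) by (simp add: edgeG_def)
  have "depth x \<le> depth y" using gedge_mono[OF g] by simp
  then have "Suc (depth u) \<le> depth y" using dc_depth1[OF assms(1)] by simp
  then have "y \<noteq> u" "y \<noteq> a" using dc_basic(3) by auto
  then have y: "y \<in> S0 \<or> y \<in> S1" using assms(3) by auto
  show ?thesis
  proof (cases "is_or y")
    case True
    then have "is_and x" using gedge_or_target[OF g] by simp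
    then show ?thesis using s1 assms(1,2) by (auto simp: sol_at_def)
  next
    case False
    show ?thesis
    proof (rule ccontr)
      assume "y \<notin> S1"
      then have "y \<in> S0" using y by simp
      then have "parN y \<in> S0" using sol_at_par[OF s0 dc_basic(7)] False by simp
      moreover have "x = parN y" using gedge_nonor_target[OF g False] by simp
      ultimately show False using dc_disj assms(1) by blast
    qed
  qed
qed

lemma dc_ustay: assumes "edgeG D u y" "y \<in> {u, a} \<union> S0 \<union> S1" shows "y = a"
proof -
  have g: "gedge D u y" using assms(1) by (simp add: edgeG_def)
  have "\<not> is_or y" "depth y = depth u" using gedge_or_source[OF g dc_basic(2)] by auto
  then show ?thesis using assms(2) dc_depth0 dc_depth1 dc_basic(2) by fastforce
qed

lemma dc_edges: "Eset D ({u, a} \<union> S0 \<union> S1) =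
   insert (u, a) (insert (a, kid0 D a) (insert (a, kid1 D a) (Eset D S0 \<union> Eset D S1)))"
proof (rule set_eqI)
  fix e :: "node \<times> node"
  obtain x y where e: "e = (x, y)" by (cases e)
  have k0: "kid0 D a \<in> S0" and k1: "kid1 D a \<in> S1" using s0 s1 by (auto simp: sol_at_def)
  show "e \<in> Eset D ({u, a} \<union> S0 \<union> S1) \<longleftrightarrow>
      e \<in> insert (u, a) (insert (a, kid0 D a) (insert (a, kid1 D a) (Eset D S0 \<union> Eset D S1)))"
  proof
    assume "e \<in> Eset D ({u, a} \<union> S0 \<union> S1)"
    then have xy: "x \<in> {u, a} \<union> S0 \<union> S1" "y \<in> {u, a} \<union> S0 \<union> S1" "edgeG D x y"
      by (auto simp: Eset_def e)
    consider "x = u" | "x = a" | "x \<in> S0" | "x \<in> S1" using xy(1) by blast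
    then show "e \<in> insert (u, a) (insert (a, kid0 D a) (insert (a, kid1 D a) (Eset D S0 \<union> Eset D S1)))"
    proof cases
      case 1
      then have "y = a" using dc_ustay xy(2,3) by blast
      then show ?thesis using 1 e by simp
    next
      case 2
      then have "y = kid0 D a \<or> y = kid1 D a" using gedge_from_and[of D a y] aa xy(3) by (auto simp: edgeG_def)
      then show ?thesis using 2 e by auto
    next
      case 3 then show ?thesis using dc_stay0[OF 3 xy(3,2)] xy e by (auto simp: Eset_def)
    next
      case 4 then show ?thesis using dc_stay1[OF 4 xy(3,2)] xy e by (auto simp: Eset_def)
    qed
  next
    assume "e \<in> insert (u, a) (insert (a, kid0 D a) (insert (a, kid1 D a) (Eset D S0 \<union> Eset D S1)))"
    then consider "e = (u, a)" | "e = (a, kid0 D a)" | "e = (a, kid1 D a)" | "e \<in> Eset D S0" | "e \<in> Eset D S1"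
      by blast
    then show "e \<in> Eset D ({u, a} \<union> S0 \<union> S1)"
    proof cases
      case 1 then show ?thesis using ua by (simp add: Eset_def)
    next
      case 2 then show ?thesis using dc_basic(5) k0 by (simp add: Eset_def)
    next
      case 3 then show ?thesis using dc_basic(6) k1 by (simp add: Eset_def)
    next
      case 4 then show ?thesis by (auto simp: Eset_def)
    next
      case 5 then show ?thesis by (auto simp: Eset_def)
    qed
  qed
qed

lemma dc_cost: "sol_cost D ({u, a} \<union> S0 \<union> S1) = cost D u a + sol_cost D S0 + sol_cost D S1"
proof -
  have sub0: "S0 \<subseteq> nodes D" and sub1: "S1 \<subseteq> nodes D" using s0 s1 by (auto simp: sol_at_def)
  have f0: "finite (Eset D S0)" and f1: "finite (Eset D S1)" using finite_Eset[OF n] sub0 sub1 by auto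
  have k0: "kid0 D a \<in> S0" and k1: "kid1 D a \<in> S1" using s0 s1 by (auto simp: sol_at_def)
  have kne: "kid0 D a \<noteq> kid1 D a" using k0 k1 dc_disj by auto
  have ua_ne: "u \<noteq> a" using dc_basic(2) aa by (cases u; cases a) auto
  have dE: "Eset D S0 \<inter> Eset D S1 = {}" using dc_disj by (auto simp: Eset_def)
  have n1: "(a, kid1 D a) \<notin> Eset D S0 \<union> Eset D S1" using dc_notin by (auto simp: Eset_def)
  have n2: "(a, kid0 D a) \<notin> insert (a, kid1 D a) (Eset D S0 \<union> Eset D S1)" using dc_notin kne by (auto simp: Eset_def)
  have n3: "(u, a) \<notin> insert (a, kid0 D a) (insert (a, kid1 D a) (Eset D S0 \<union> Eset D S1))"
    using dc_notin ua_ne by (auto simp: Eset_def)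
  have "sol_cost D ({u, a} \<union> S0 \<union> S1) =
     cost D u a + (cost D a (kid0 D a) + (cost D a (kid1 D a) + (sol_cost D S0 + sol_cost D S1)))"
    unfolding sol_cost_Eset dc_edges
    using f0 f1 dE n1 n2 n3 by (simp add: sum.union_disjoint)
  then show ?thesis using cost_and[OF aa] by (simp add: add.assoc)
qed

lemma dc_sol: assumes "u \<in> G" "a \<in> G" shows "sol_at D G u ({u, a} \<union> S0 \<union> S1)"
proof -
  let ?T = "{u, a} \<union> S0 \<union> S1"
  let ?R = "\<lambda>x y. edgeG D x y \<and> x \<in> ?T \<and> y \<in> ?T"
  have k0: "kid0 D a \<in> S0" and k1: "kid1 D a \<in> S1" using s0 s1 by (auto simp: sol_at_def)
  have "S0 \<subseteq> G" "S1 \<subseteq> G" "S0 \<subseteq> nodes D" "S1 \<subseteq> nodes D" using s0 s1 unfolding sol_at_def by blast+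
  then have sub: "?T \<subseteq> G" "?T \<subseteq> nodes D" using assms dc_basic(12,13) by blast+
  have ra: "?R u a" using ua by simp
  have rk0: "?R a (kid0 D a)" "?R a (kid1 D a)" using dc_basic(5,6) k0 k1 by auto
  have reach: "?R\<^sup>*\<^sup>* u v" if vT: "v \<in> ?T" for v
  proof -
    consider "v = u" | "v = a" | "v \<in> S0" | "v \<in> S1" using vT by blast
    then show ?thesis
    proof cases
      case 3
      then have "(\<lambda>x y. edgeG D x y \<and> x \<in> S0 \<and> y \<in> S0)\<^sup>*\<^sup>* (kid0 D a) v" using s0 by (simp add: sol_at_def)
      then have "?R\<^sup>*\<^sup>* (kid0 D a) v" by (rule mono_rtranclp[rule_format, rotated]) blast
      then have "?R\<^sup>*\<^sup>* a v" by (rule converse_rtranclp_into_rtranclp[of ?R, OF rk0(1)])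
      then show ?thesis by (rule converse_rtranclp_into_rtranclp[of ?R, OF ra])
    next
      case 4
      then have "(\<lambda>x y. edgeG D x y \<and> x \<in> S1 \<and> y \<in> S1)\<^sup>*\<^sup>* (kid1 D a) v" using s1 by (simp add: sol_at_def)
      then have "?R\<^sup>*\<^sup>* (kid1 D a) v" by (rule mono_rtranclp[rule_format, rotated]) blast
      then have "?R\<^sup>*\<^sup>* a v" by (rule converse_rtranclp_into_rtranclp[of ?R, OF rk0(2)])
      then show ?thesis by (rule converse_rtranclp_into_rtranclp[of ?R, OF ra])
    qed (use ra in auto)
  qed
  have andc: "\<forall>b\<in>?T. is_and b \<longrightarrow> (\<forall>v. edgeG D b v \<longrightarrow> v \<in> ?T)"
  proof (intro ballI impI allI)
    fix b v assume b: "b \<in> ?T" "is_and b" "edgeG D b v"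
    consider "b = u" | "b = a" | "b \<in> S0" | "b \<in> S1" using b(1) by blast
    then show "v \<in> ?T"
    proof cases
      case 1 then have False using b(2) dc_basic(2) by (cases u) auto
      then show ?thesis ..
    next
      case 2 then have "v = kid0 D a \<or> v = kid1 D a" using gedge_from_and[of D a v] b by (simp add: edgeG_def)
      then show ?thesis using k0 k1 by blast
    next
      case 3 then have "v \<in> S0" using s0 b(2,3) unfolding sol_at_def by blast
      then show ?thesis by blast
    next
      case 4 then have "v \<in> S1" using s1 b(2,3) unfolding sol_at_def by blast
      then show ?thesis by blast
    qed
  qed
  have orc: "\<forall>w\<in>?T. is_or w \<longrightarrow> (\<exists>!v. edgeG D w v \<and> v \<in> ?T)"
  proof (intro ballI impI)
    fix w assume w: "w \<in> ?T" "is_or w"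
    consider "w = u" | "w = a" | "w \<in> S0" | "w \<in> S1" using w(1) by blast
    then show "\<exists>!v. edgeG D w v \<and> v \<in> ?T"
    proof cases
      case 1
      show ?thesis
      proof (rule ex1I[of _ a])
        show "edgeG D w a \<and> a \<in> ?T" using ua 1 by simp
      next
        fix v' assume "edgeG D w v' \<and> v' \<in> ?T"
        then show "v' = a" using dc_ustay 1 by blast
      qed
    next
      case 2 then have False using w(2) aa by (cases a) auto
      then show ?thesis ..
    next
      case 3
      have "\<exists>!v. edgeG D w v \<and> v \<in> S0" using sol_at_or[OF s0 3 w(2)] .
      then obtain v where v: "edgeG D w v" "v \<in> S0" "\<forall>v'. edgeG D w v' \<and> v' \<in> S0 \<longrightarrow> v' = v"
        by blast
      show ?thesis
      proof (rule ex1I[of _ v])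
        show "edgeG D w v \<and> v \<in> ?T" using v(1,2) by blast
      next
        fix v' assume "edgeG D w v' \<and> v' \<in> ?T"
        then show "v' = v" using dc_stay0[OF 3] v(3) by blast
      qed
    next
      case 4
      have "\<exists>!v. edgeG D w v \<and> v \<in> S1" using sol_at_or[OF s1 4 w(2)] .
      then obtain v where v: "edgeG D w v" "v \<in> S1" "\<forall>v'. edgeG D w v' \<and> v' \<in> S1 \<longrightarrow> v' = v"
        by blast
      show ?thesis
      proof (rule ex1I[of _ v])
        show "edgeG D w v \<and> v \<in> ?T" using v(1,2) by blast
      next
        fix v' assume "edgeG D w v' \<and> v' \<in> ?T"
        then show "v' = v" using dc_stay1[OF 4] v(3) by blast
      qed
    qed
  qed
  show ?thesis
  proof (rule sol_atI[OF _ sub reach])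
    show "u \<in> ?T" by simp
  next
    fix b v assume "b \<in> ?T" "is_and b" "edgeG D b v"
    then show "v \<in> ?T" using andc by blast
  next
    fix w assume "w \<in> ?T" "is_or w"
    then show "\<exists>!v. edgeG D w v \<and> v \<in> ?T" using orc by blast
  qed
qed

end


lemma wfn_depth: "wfn D v \<Longrightarrow> depth v \<le> fF D"
  by (cases v) auto

lemma sub_sol:
  assumes s: "sol_at D G u T" and k: "k \<in> T"
  shows "sol_at D G k {v \<in> T. (\<lambda>x y. edgeG D x y \<and> x \<in> T \<and> y \<in> T)\<^sup>*\<^sup>* k v}"
proof -
  let ?R = "\<lambda>x y. edgeG D x y \<and> x \<in> T \<and> y \<in> T"
  let ?Ta = "{v \<in> T. ?R\<^sup>*\<^sup>* k v}"
  let ?Rz = "\<lambda>x y. edgeG D x y \<and> x \<in> ?Ta \<and> y \<in> ?Ta"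
  have r0: "?Rz\<^sup>*\<^sup>* k v" if rk: "?R\<^sup>*\<^sup>* k v" for v
  proof (rule rtranclp_induct[of ?R k v "\<lambda>v. ?Rz\<^sup>*\<^sup>* k v", OF rk])
    show "?Rz\<^sup>*\<^sup>* k k" by simp
  next
    fix y z assume h1: "?R\<^sup>*\<^sup>* k y" and h2: "?R y z" and IH: "?Rz\<^sup>*\<^sup>* k y"
    have kz: "?R\<^sup>*\<^sup>* k z" using h1 h2 by (rule rtranclp.rtrancl_into_rtrancl)
    have yz: "edgeG D y z" "y \<in> T" "z \<in> T" using h2 by auto
    have "y \<in> ?Ta" using yz(2) h1 by blast
    moreover have "z \<in> ?Ta" using yz(3) kz by blast
    ultimately have "?Rz y z" using yz(1) by blast
    then show "?Rz\<^sup>*\<^sup>* k z" using IH by (rule rtranclp.rtrancl_into_rtrancl[rotated])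
  qed
  have sG: "T \<subseteq> G" and sN: "T \<subseteq> nodes D" using sol_at_subG[OF s] sol_at_nodes[OF s] by auto
  show ?thesis
  proof (rule sol_atI)
    show "k \<in> ?Ta" using k by simp
    show "?Ta \<subseteq> G" using sG by blast
    show "?Ta \<subseteq> nodes D" using sN by blast
  next
    fix v assume "v \<in> ?Ta"
    then show "?Rz\<^sup>*\<^sup>* k v" using r0 by blast
  next
    fix b v assume b: "b \<in> ?Ta" "is_and b" "edgeG D b v"
    have bT: "b \<in> T" using b(1) by simp
    have "v \<in> T" using sol_at_and[OF s bT b(2,3)] .
    then have "?R b v" using b by simp
    moreover have "?R\<^sup>*\<^sup>* k b" using b(1) by simp
    ultimately have "?R\<^sup>*\<^sup>* k v" by (simp add: rtranclp.rtrancl_into_rtrancl)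
    then show "v \<in> ?Ta" using \<open>v \<in> T\<close> by blast
  next
    fix w assume w: "w \<in> ?Ta" "is_or w"
    have wT: "w \<in> T" using w(1) by simp
    have "\<exists>!v. edgeG D w v \<and> v \<in> T" using sol_at_or[OF s wT w(2)] .
    then obtain v where v: "edgeG D w v" "v \<in> T" and vu: "\<And>v'. edgeG D w v' \<Longrightarrow> v' \<in> T \<Longrightarrow> v' = v"
      by blast
    have "?R w v" using v w(1) by simp
    moreover have "?R\<^sup>*\<^sup>* k w" using w(1) by simp
    ultimately have "?R\<^sup>*\<^sup>* k v" by (simp add: rtranclp.rtrancl_into_rtrancl)
    then have vT0: "v \<in> ?Ta" using v(2) by blast
    show "\<exists>!v. edgeG D w v \<and> v \<in> ?Ta"
    proof (rule ex1I[of _ v])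
      show "edgeG D w v \<and> v \<in> ?Ta" using v(1) vT0 by blast
    next
      fix v' assume "edgeG D w v' \<and> v' \<in> ?Ta"
      then show "v' = v" using vu by blast
    qed
  qed
qed

definition Inv :: "mt_data \<Rightarrow> mt_state \<Rightarrow> bool" where
  "Inv D st \<longleftrightarrow> Gp st \<subseteq> nodes D \<and> root D \<in> Gp st \<and> Ex st \<subseteq> Gp st
    \<and> (\<forall>u\<in>Ex st. is_or u \<and> termch u \<in> Gp st)
    \<and> (\<forall>a\<in>Gp st. is_and a \<longrightarrow> kid0 D a \<in> Gp st \<and> kid1 D a \<in> Gp st)
    \<and> (\<forall>c\<in>Gp st. \<not> is_or c \<longrightarrow> parN c \<in> Ex st)
    \<and> (\<forall>w. w \<notin> Ex st \<longrightarrow> UB st w = \<infinity>)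
    \<and> (\<forall>u\<in>Ex st. UB st u = val D (Gp st) (UB st) u)"

lemma InvD:
  assumes "Inv D st"
  shows "Gp st \<subseteq> nodes D" "root D \<in> Gp st" "Ex st \<subseteq> Gp st"
    "\<And>u. u \<in> Ex st \<Longrightarrow> is_or u" "\<And>u. u \<in> Ex st \<Longrightarrow> termch u \<in> Gp st"
    "\<And>a. a \<in> Gp st \<Longrightarrow> is_and a \<Longrightarrow> kid0 D a \<in> Gp st \<and> kid1 D a \<in> Gp st"
    "\<And>c. c \<in> Gp st \<Longrightarrow> \<not> is_or c \<Longrightarrow> parN c \<in> Ex st"
    "\<And>w. w \<notin> Ex st \<Longrightarrow> UB st w = \<infinity>"
    "\<And>u. u \<in> Ex st \<Longrightarrow> UB st u = val D (Gp st) (UB st) u"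
  using assms unfolding Inv_def by blast+

lemma val_le_term: "val D G B u \<le> cost D u (termch u)"
  by (simp add: val_def)

lemma val_le_and: "a \<in> andch D G u \<Longrightarrow> val D G B u \<le> cost D u a + andval D B a"
  unfolding val_def by (meson INF_lower min.coboundedI1)

lemma lower:
  assumes n: "0 < nN D" and inv: "Inv D st"
  shows "sol_at D (Gp st) u T \<Longrightarrow> is_or u \<Longrightarrow> UB st u \<le> sol_cost D T"
proof (induction "card T" arbitrary: u T rule: less_induct)
  case less
  let ?R = "\<lambda>x y. edgeG D x y \<and> x \<in> T \<and> y \<in> T"
  have "\<exists>!v. edgeG D u v \<and> v \<in> T" using sol_at_or[OF less(2) sol_at_in[OF less(2)] less(3)] .
  then obtain c where c: "edgeG D u c" "c \<in> T" and cu: "\<And>y. edgeG D u y \<Longrightarrow> y \<in> T \<Longrightarrow> y = c"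
    by blast
  have gc: "gedge D u c" using c(1) by (simp add: edgeG_def)
  have nc: "\<not> is_or c" using gedge_or_source[OF gc less(3)] by simp
  have uc: "u = parN c" using gedge_nonor_target[OF gc nc] by simp
  have cG: "c \<in> Gp st" using sol_at_subG[OF less(2)] c(2) by blast
  have uEx: "u \<in> Ex st" using InvD(7)[OF inv cG nc] uc by simp
  have UBu: "UB st u = val D (Gp st) (UB st) u" using InvD(9)[OF inv uEx] .
  have uT: "u \<in> T" using sol_at_in[OF less(2)] .
  have finT: "finite T" using sol_at_nodes[OF less(2)] finite_nodes[OF n] finite_subset by blast
  show ?case
  proof (cases "is_and c")
    case True
    let ?ka = "kid0 D c" and ?kb = "kid1 D c"
    have ek: "edgeG D c ?ka" "edgeG D c ?kb" using edgeG_and_kids[OF c(1) True] by auto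
    have k0T: "?ka \<in> T" and k1T: "?kb \<in> T" using sol_at_and[OF less(2) c(2) True] ek by auto
    let ?Ta = "{v \<in> T. ?R\<^sup>*\<^sup>* ?ka v}" and ?Tb = "{v \<in> T. ?R\<^sup>*\<^sup>* ?kb v}"
    have s0: "sol_at D (Gp st) ?ka ?Ta" by (rule sub_sol[OF less(2) k0T])
    have s1: "sol_at D (Gp st) ?kb ?Tb" by (rule sub_sol[OF less(2) k1T])
    have Teq: "T = {u, c} \<union> ?Ta \<union> ?Tb"
    proof
      show "{u, c} \<union> ?Ta \<union> ?Tb \<subseteq> T" using uT c(2) by blast
    next
      show "T \<subseteq> {u, c} \<union> ?Ta \<union> ?Tb"
      proof
        fix v assume vT: "v \<in> T"
        have "?R\<^sup>*\<^sup>* u v" using sol_at_reach[OF less(2) vT] .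
        then show "v \<in> {u, c} \<union> ?Ta \<union> ?Tb"
        proof (cases rule: converse_rtranclpE)
          case base then show ?thesis by simp
        next
          case (step y)
          then have yc: "y = c" using cu by blast
          have "?R\<^sup>*\<^sup>* c v" using step(2) yc by simp
          then show ?thesis
          proof (cases rule: converse_rtranclpE)
            case base then show ?thesis by simp
          next
            case (step z)
            then have "z = ?ka \<or> z = ?kb" using gedge_from_and[of D c z] True by (simp add: edgeG_def)
            then show ?thesis using step(2) vT by blast
          qed
        qed
      qed
    qed
    have unot: "u \<notin> ?Ta" "u \<notin> ?Tb" using dc_notin[OF n c(1) True s0 s1] by auto
    have ko: "is_or ?ka" "is_or ?kb" using dc_basic[OF n c(1) True s0 s1] by auto
    have c0: "card ?Ta < card T" by (rule psubset_card_mono[OF finT]) (use uT unot in blast)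
    have c1: "card ?Tb < card T" by (rule psubset_card_mono[OF finT]) (use uT unot in blast)
    have IH0: "UB st ?ka \<le> sol_cost D ?Ta" using less(1)[OF c0 s0 ko(1)] .
    have IH1: "UB st ?kb \<le> sol_cost D ?Tb" using less(1)[OF c1 s1 ko(2)] .
    have sc: "sol_cost D T = cost D u c + sol_cost D ?Ta + sol_cost D ?Tb"
      using dc_cost[OF n c(1) True s0 s1] Teq by simp
    have cand: "c \<in> andch D (Gp st) u" using cG c(1) True by (simp add: andch_def)
    have "UB st u \<le> cost D u c + andval D (UB st) c" using val_le_and[OF cand] UBu by simp
    also have "\<dots> = cost D u c + (UB st ?ka + UB st ?kb)" by (simp add: andval_def)
    also have "\<dots> \<le> cost D u c + (sol_cost D ?Ta + sol_cost D ?Tb)"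
      using IH0 IH1 by (intro add_mono) auto
    also have "\<dots> = sol_cost D T" using sc by (simp add: add.assoc)
    finally show ?thesis .
  next
    case False
    have ct: "c = termch u" using gedge_term[OF gc less(3) False] .
    obtain I d where cI: "c = TermN I d" using nc False by (cases c) auto
    have noc: "\<not> edgeG D c z" for z using gedge_from_term cI by (simp add: edgeG_def)
    have Teq: "T = {u, c}"
    proof
      show "{u, c} \<subseteq> T" using uT c(2) by blast
    next
      show "T \<subseteq> {u, c}"
      proof
        fix v assume vT: "v \<in> T"
        have "?R\<^sup>*\<^sup>* u v" using sol_at_reach[OF less(2) vT] .
        then show "v \<in> {u, c}"
        proof (cases rule: converse_rtranclpE)
          case base then show ?thesis by simp
        next
          case (step y)
          then have yc: "y = c" using cu by blast
          have "?R\<^sup>*\<^sup>* c v" using step(2) yc by simp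
          then show ?thesis
            by (cases rule: converse_rtranclpE) (use noc in auto)
        qed
      qed
    qed
    have "Eset D T = {(u, c)}"
    proof (rule set_eqI)
      fix e :: "node \<times> node"
      obtain x y where e: "e = (x, y)" by (cases e)
      show "e \<in> Eset D T \<longleftrightarrow> e \<in> {(u, c)}"
      proof
        assume "e \<in> Eset D T"
        then have xy: "x \<in> T" "y \<in> T" "edgeG D x y" by (auto simp: Eset_def e)
        then have "x = u" using Teq noc by blast
        then show "e \<in> {(u, c)}" using cu xy e by blast
      qed (use c uT e in \<open>auto simp: Eset_def\<close>)
    qed
    then have "sol_cost D T = cost D u c" by (simp add: sol_cost_Eset)
    then show ?thesis using UBu val_le_term[of D "Gp st" "UB st" u] ct by simp
  qed
qed

context
  fixes D st ch
  assumes n: "0 < nN D" and inv: "Inv D st" and gc: "good_choice D st ch"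
begin

lemma inner_facts:
  assumes uEx: "u \<in> Ex st" and ne: "andch D (Gp st) u \<noteq> {}"
    and nl: "\<not> cost D u (termch u) \<le> (INF a\<in>andch D (Gp st) u. cost D u a + andval D (UB st) a)"
  shows "ch u \<in> andch D (Gp st) u"
    "kid0 D (ch u) \<in> Ex st" "kid1 D (ch u) \<in> Ex st"
    "val D (Gp st) (UB st) u = cost D u (ch u) + andval D (UB st) (ch u)"
proof -
  let ?F = "\<lambda>a. cost D u a + andval D (UB st) a"
  have chA: "ch u \<in> andch D (Gp st) u" and chm: "\<forall>a\<in>andch D (Gp st) u. ?F (ch u) \<le> ?F a"
    using gc ne unfolding good_choice_def by blast+
  show "ch u \<in> andch D (Gp st) u" by (rule chA)
  have INFeq: "(INF a\<in>andch D (Gp st) u. ?F a) = ?F (ch u)"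
  proof (rule antisym)
    show "(INF a\<in>andch D (Gp st) u. ?F a) \<le> ?F (ch u)" using chA by (rule INF_lower)
    show "?F (ch u) \<le> (INF a\<in>andch D (Gp st) u. ?F a)" using chm by (simp add: le_INF_iff)
  qed
  have lt: "?F (ch u) < cost D u (termch u)" using nl INFeq by simp
  then have "?F (ch u) \<noteq> \<infinity>" by auto
  then have "UB st (kid0 D (ch u)) \<noteq> \<infinity>" "UB st (kid1 D (ch u)) \<noteq> \<infinity>" by (auto simp: andval_def)
  then show "kid0 D (ch u) \<in> Ex st" "kid1 D (ch u) \<in> Ex st" using InvD(8)[OF inv] by blast+
  show "val D (Gp st) (UB st) u = ?F (ch u)"
    unfolding val_def INFeq using lt by simp
qed

lemma getsol_ok:
  "getsol D st ch u S \<Longrightarrow> u \<in> Ex st \<Longrightarrow> sol_at D (Gp st) u S \<and> sol_cost D S \<le> UB st u"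
proof (induction rule: getsol.induct)
  case (leaf u)
  let ?t = "termch u"
  have uo: "is_or u" using InvD(4)[OF inv leaf(2)] .
  have uG: "u \<in> Gp st" using InvD(3)[OF inv] leaf(2) by blast
  have tG: "?t \<in> Gp st" using InvD(5)[OF inv leaf(2)] .
  have uN: "u \<in> nodes D" using InvD(1)[OF inv] uG by blast
  have ut: "edgeG D u ?t" using or_termch_edge[OF n uN uo] .
  obtain I d where uI: "u = OrN I d" using uo by (cases u) auto
  have noc: "\<not> edgeG D ?t z" for z using gedge_from_term uI by (simp add: edgeG_def)
  have nself: "\<not> edgeG D u u" using no_edge_to_self_or[OF uo] by (simp add: edgeG_def)
  have sol: "sol_at D (Gp st) u {u, ?t}"
  proof (rule sol_atI)
    show "u \<in> {u, ?t}" by simp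
    show "{u, ?t} \<subseteq> Gp st" using uG tG by blast
    show "{u, ?t} \<subseteq> nodes D" using uN edgeG_nodes[OF ut] by blast
  next
    fix v assume "v \<in> {u, ?t}"
    then show "(\<lambda>x y. edgeG D x y \<and> x \<in> {u, ?t} \<and> y \<in> {u, ?t})\<^sup>*\<^sup>* u v"
      using ut by auto
  next
    fix b v assume "b \<in> {u, ?t}" "is_and b" "edgeG D b v"
    then show "v \<in> {u, ?t}" using uI by auto
  next
    fix w assume w: "w \<in> {u, ?t}" "is_or w"
    then have wu: "w = u" using uI by auto
    show "\<exists>!v. edgeG D w v \<and> v \<in> {u, ?t}"
    proof (rule ex1I[of _ ?t])
      show "edgeG D w ?t \<and> ?t \<in> {u, ?t}" using ut wu by simp
    next
      fix v assume "edgeG D w v \<and> v \<in> {u, ?t}"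
      then show "v = ?t" using wu nself by auto
    qed
  qed
  have "Eset D {u, ?t} = {(u, ?t)}"
  proof (rule set_eqI)
    fix e :: "node \<times> node"
    obtain x y where e: "e = (x, y)" by (cases e)
    show "e \<in> Eset D {u, ?t} \<longleftrightarrow> e \<in> {(u, ?t)}"
      using noc nself ut by (auto simp: Eset_def e)
  qed
  then have sc: "sol_cost D {u, ?t} = cost D u ?t" by (simp add: sol_cost_Eset)
  have "cost D u ?t \<le> (INF a\<in>andch D (Gp st) u. cost D u a + andval D (UB st) a)"
    using leaf(1) by auto
  then have "val D (Gp st) (UB st) u = cost D u ?t" by (simp add: val_def min_def)
  then have "UB st u = cost D u ?t" using InvD(9)[OF inv leaf(2)] by simp
  then show ?case using sol sc by simp
next
  case (inner u S0 S1)
  let ?a = "ch u"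
  have f: "?a \<in> andch D (Gp st) u" "kid0 D ?a \<in> Ex st" "kid1 D ?a \<in> Ex st"
    "val D (Gp st) (UB st) u = cost D u ?a + andval D (UB st) ?a"
    using inner_facts[OF inner(7) inner(1) inner(2)] by auto
  have IH0: "sol_at D (Gp st) (kid0 D ?a) S0 \<and> sol_cost D S0 \<le> UB st (kid0 D ?a)" using inner(5) f(2) .
  have IH1: "sol_at D (Gp st) (kid1 D ?a) S1 \<and> sol_cost D S1 \<le> UB st (kid1 D ?a)" using inner(6) f(3) .
  have aG: "?a \<in> Gp st" and ua: "edgeG D u ?a" and aa: "is_and ?a" using f(1) by (auto simp: andch_def)
  have uG: "u \<in> Gp st" using InvD(3)[OF inv] inner(7) by blast
  have sol: "sol_at D (Gp st) u ({u, ?a} \<union> S0 \<union> S1)"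
    using dc_sol[OF n ua aa conjunct1[OF IH0] conjunct1[OF IH1] uG aG] .
  have "sol_cost D ({u, ?a} \<union> S0 \<union> S1) = cost D u ?a + sol_cost D S0 + sol_cost D S1"
    using dc_cost[OF n ua aa conjunct1[OF IH0] conjunct1[OF IH1]] .
  also have "\<dots> \<le> cost D u ?a + (UB st (kid0 D ?a) + UB st (kid1 D ?a))"
    unfolding add.assoc using IH0 IH1 by (intro add_mono) auto
  also have "\<dots> = UB st u" using f(4) InvD(9)[OF inv inner(7)] by (simp add: andval_def)
  finally show ?case using sol by simp
qed

lemma getsol_ex: "u \<in> Ex st \<Longrightarrow> \<exists>S. getsol D st ch u S"
proof (induction "fF D - depth u" arbitrary: u rule: less_induct)
  case less
  show ?case
  proof (cases "andch D (Gp st) u = {} \<or>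
      cost D u (termch u) \<le> (INF a\<in>andch D (Gp st) u. cost D u a + andval D (UB st) a)")
    case True
    then show ?thesis using getsol.leaf by blast
  next
    case False
    then have ne: "andch D (Gp st) u \<noteq> {}"
      and nl: "\<not> cost D u (termch u) \<le> (INF a\<in>andch D (Gp st) u. cost D u a + andval D (UB st) a)" by auto
    note f = inner_facts[OF less(2) ne nl]
    have ua: "edgeG D u (ch u)" and aa: "is_and (ch u)" using f(1) by (auto simp: andch_def)
    have gua: "gedge D u (ch u)" using ua by (simp add: edgeG_def)
    have dk: "depth (kid0 D (ch u)) = Suc (depth u)" "depth (kid1 D (ch u)) = Suc (depth u)"
      using gedge_and_kids[OF gua aa] by auto
    have kN: "kid0 D (ch u) \<in> nodes D" "kid1 D (ch u) \<in> nodes D"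
      using f(2,3) InvD(1,3)[OF inv] by blast+
    have "depth (kid0 D (ch u)) \<le> fF D" "depth (kid1 D (ch u)) \<le> fF D"
      using kN nodes_wfn[OF n] wfn_depth by blast+
    then have lt: "fF D - depth (kid0 D (ch u)) < fF D - depth u" "fF D - depth (kid1 D (ch u)) < fF D - depth u"
      using dk by auto
    obtain S0 where S0: "getsol D st ch (kid0 D (ch u)) S0" using less(1)[OF lt(1) f(2)] by blast
    obtain S1 where S1: "getsol D st ch (kid1 D (ch u)) S1" using less(1)[OF lt(2) f(3)] by blast
    show ?thesis using getsol.inner[OF ne nl S0 S1] by blast
  qed
qed

end


lemma and_kids_or: "is_and a \<Longrightarrow> is_or (kid0 D a) \<and> is_or (kid1 D a)"
  by (cases a) auto

lemma and_not_or: "is_and b \<Longrightarrow> \<not> is_or b"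
  by (cases b) auto

lemma termch_not_and: "is_or x \<Longrightarrow> \<not> is_and (termch x) \<and> \<not> is_or (termch x) \<and> parN (termch x) = x"
  by (cases x) auto

lemma Inv_init: "Inv D (mt_init D)"
  unfolding Inv_def mt_init_def by (auto simp: nodes_def root_def)

lemma descend_ok:
  "descend D st u x \<Longrightarrow> Inv D st \<Longrightarrow> u \<in> Gp st \<Longrightarrow> is_or u \<Longrightarrow> x \<in> Gp st \<and> is_or x \<and> x \<notin> Ex st"
proof (induction rule: descend.induct)
  case (stop u) then show ?case by simp
next
  case (go u a x)
  have aG: "a \<in> Gp st" and aa: "is_and a" using go(2) by (auto simp: andch_def)
  have kG: "kid0 D a \<in> Gp st" "kid1 D a \<in> Gp st" using InvD(6)[OF go(6) aG aa] by auto
  have ko: "is_or (kid0 D a)" "is_or (kid1 D a)" using and_kids_or[OF aa] by auto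
  show ?case using go(5)[OF go(6)] kG ko by (simp split: if_splits)
qed

lemma descend_notin: "descend D st u x \<Longrightarrow> u \<notin> Ex st \<Longrightarrow> x = u"
  by (cases rule: descend.cases) auto

lemma val_cong:
  assumes "\<And>b. b \<in> andch D G w \<Longrightarrow> B (kid0 D b) = B' (kid0 D b) \<and> B (kid1 D b) = B' (kid1 D b)"
  shows "val D G B w = val D G B' w"
proof -
  have "(INF b\<in>andch D G w. cost D w b + andval D B b) = (INF b\<in>andch D G w. cost D w b + andval D B' b)"
    by (rule INF_cong) (use assms in \<open>auto simp: andval_def\<close>)
  then show ?thesis by (simp add: val_def)
qed

lemma val_mono:
  assumes "\<And>z. B' z \<le> B z"
  shows "val D G B' w \<le> val D G B w"
proof -
  have "(INF b\<in>andch D G w. cost D w b + andval D B' b) \<le> (INF b\<in>andch D G w. cost D w b + andval D B b)"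
    by (rule INF_mono') (use assms in \<open>auto simp: andval_def intro!: add_mono\<close>)
  then show ?thesis unfolding val_def by (rule min.mono) simp
qed

lemma andch_kid_depth:
  assumes "b \<in> andch D G w"
  shows "kid0 D b \<noteq> w" "kid1 D b \<noteq> w" "edgeG D b (kid0 D b)" "edgeG D b (kid1 D b)"
proof -
  have e: "edgeG D w b" and ba: "is_and b" using assms by (auto simp: andch_def)
  have g: "gedge D w b" using e by (simp add: edgeG_def)
  have "depth (kid0 D b) = Suc (depth w)" "depth (kid1 D b) = Suc (depth w)"
    using gedge_and_kids[OF g ba] by auto
  then show "kid0 D b \<noteq> w" "kid1 D b \<noteq> w" by auto
  show "edgeG D b (kid0 D b)" "edgeG D b (kid1 D b)" using edgeG_and_kids[OF e ba] by auto
qed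

definition PI :: "mt_data \<Rightarrow> node set \<Rightarrow> node set \<Rightarrow> node set \<Rightarrow> (node \<Rightarrow> ereal) \<Rightarrow> bool" where
  "PI D G E Q B \<longleftrightarrow> Q \<subseteq> E \<and> (\<forall>w. w \<notin> E \<longrightarrow> B w = \<infinity>)
     \<and> (\<forall>w\<in>E. val D G B w \<le> B w) \<and> (\<forall>w\<in>E. w \<notin> Q \<longrightarrow> B w = val D G B w)"

lemma prop_step_PI:
  assumes st: "prop_step D (\<lambda>v b. v < b) G (Q, B) (Q', B')"
    and pi: "PI D G E Q B"
    and EG: "E \<subseteq> G" and Eor: "\<And>w. w \<in> E \<Longrightarrow> is_or w"
    and par: "\<And>u. parents D G u \<subseteq> E"
  shows "PI D G E Q' B'"
  using st
proof (cases rule: prop_step.cases)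
  case (upd u)
  let ?v = "val D G B u"
  have QE: "Q \<subseteq> E" and inf: "\<And>w. w \<notin> E \<Longrightarrow> B w = \<infinity>" and le: "\<And>w. w \<in> E \<Longrightarrow> val D G B w \<le> B w"
    and eq: "\<And>w. w \<in> E \<Longrightarrow> w \<notin> Q \<Longrightarrow> B w = val D G B w"
    using pi unfolding PI_def by blast+
  have uE: "u \<in> E" using upd(3) QE by blast
  have B'd: "B' = B(u := ?v)" using upd by simp
  have Q'd: "Q' = Q - {u} \<union> parents D G u" using upd by simp
  have lt: "?v < B u" using upd by simp
  have dec: "B' z \<le> B z" for z using lt B'd by auto
  have valu: "val D G B' u = ?v"
    by (rule sym, rule val_cong) (use andch_kid_depth B'd in auto)
  have valw: "val D G B' w = val D G B w" if "w \<in> E" "w \<notin> parents D G u" for w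
  proof (rule sym, rule val_cong)
    fix b assume bA: "b \<in> andch D G w"
    have bG: "b \<in> G" and ba: "is_and b" and wb: "edgeG D w b" using bA by (auto simp: andch_def)
    have wG: "w \<in> G" using that(1) EG by blast
    have "kid0 D b \<noteq> u"
    proof
      assume "kid0 D b = u"
      then have "w \<in> parents D G u" using andch_kid_depth(3)[OF bA] bG ba wb wG Eor[OF that(1)]
        unfolding parents_def by blast
      then show False using that(2) by blast
    qed
    moreover have "kid1 D b \<noteq> u"
    proof
      assume "kid1 D b = u"
      then have "w \<in> parents D G u" using andch_kid_depth(4)[OF bA] bG ba wb wG Eor[OF that(1)]
        unfolding parents_def by blast
      then show False using that(2) by blast
    qed
    ultimately show "B (kid0 D b) = B' (kid0 D b) \<and> B (kid1 D b) = B' (kid1 D b)" using B'd by simp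
  qed
  show ?thesis unfolding PI_def
  proof (intro conjI allI ballI impI)
    show "Q' \<subseteq> E" using Q'd QE par uE by blast
  next
    fix w assume "w \<notin> E"
    then show "B' w = \<infinity>" using inf uE B'd by auto
  next
    fix w assume wE: "w \<in> E"
    show "val D G B' w \<le> B' w"
    proof (cases "w = u")
      case True then show ?thesis using valu B'd by simp
    next
      case False
      have "val D G B' w \<le> val D G B w" by (rule val_mono) (rule dec)
      also have "\<dots> \<le> B w" using le[OF wE] .
      finally show ?thesis using False B'd by simp
    qed
  next
    fix w assume wE: "w \<in> E" and wQ: "w \<notin> Q'"
    show "B' w = val D G B' w"
    proof (cases "w = u")
      case True then show ?thesis using valu B'd by simp
    next
      case False
      then have "w \<notin> Q" "w \<notin> parents D G u" using wQ Q'd by auto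
      then show ?thesis using eq[OF wE] valw[OF wE] False B'd by simp
    qed
  qed
next
  case (noupd u)
  have QE: "Q \<subseteq> E" and inf: "\<And>w. w \<notin> E \<Longrightarrow> B w = \<infinity>" and le: "\<And>w. w \<in> E \<Longrightarrow> val D G B w \<le> B w"
    and eq: "\<And>w. w \<in> E \<Longrightarrow> w \<notin> Q \<Longrightarrow> B w = val D G B w"
    using pi unfolding PI_def by blast+
  have uE: "u \<in> E" using noupd(3) QE by blast
  have "B u = val D G B u" using le[OF uE] noupd by simp
  then show ?thesis using noupd QE inf le eq unfolding PI_def by auto
qed

lemma prop_star_PI:
  assumes "(prop_step D (\<lambda>v b. v < b) G)\<^sup>*\<^sup>* s t"
    and "PI D G E (fst s) (snd s)"
    and EG: "E \<subseteq> G" and Eor: "\<And>w. w \<in> E \<Longrightarrow> is_or w"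
    and par: "\<And>u. parents D G u \<subseteq> E"
  shows "PI D G E (fst t) (snd t)"
  using assms(1,2)
proof (induction rule: rtranclp_induct)
  case base then show ?case by simp
next
  case (step y z)
  have "prop_step D (\<lambda>v b. v < b) G (fst y, snd y) (fst z, snd z)" using step.hyps(2) by simp
  then show ?case using prop_step_PI[OF _ step.IH[OF step.prems] EG Eor par] by blast
qed

lemma iter_Inv:
  assumes n: "0 < nN D" and inv: "Inv D st" and it: "mt_iter D st st'"
  shows "Inv D st' \<and> root D \<in> Ex st'"
proof -
  obtain x LB2 UB2 where ds: "descend D st (root D) x"
    and pU: "propagate D (\<lambda>v b. v < b) (new_G D st x) x (UB st) UB2"
    and st'd: "st' = \<lparr>Gp = new_G D st x, Ex = Ex st \<union> {x}, LB = LB2, UB = UB2\<rparr>"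
    using it unfolding mt_iter_def by blast
  let ?G = "new_G D st x" and ?E = "Ex st \<union> {x}"
  have rootor: "is_or (root D)" by (simp add: root_def)
  have xf: "x \<in> Gp st \<and> is_or x \<and> x \<notin> Ex st" using descend_ok[OF ds inv InvD(2)[OF inv] rootor] .
  have xG: "x \<in> Gp st" and xo: "is_or x" and xn: "x \<notin> Ex st" using xf by auto
  have xN: "x \<in> nodes D" using xG InvD(1)[OF inv] by blast
  obtain I d where xI: "x = OrN I d" using xo by (cases x) auto
  have Gmem: "v \<in> ?G \<longleftrightarrow> v \<in> Gp st \<or> v = termch x \<or>
      (\<exists>a. edgeG D x a \<and> is_and a \<and> (v = a \<or> v = kid0 D a \<or> v = kid1 D a))" for v
    unfolding new_G_def by blast
  have Gcases: "v \<in> ?G \<Longrightarrow> (v \<in> Gp st \<Longrightarrow> P) \<Longrightarrow> (v = termch x \<Longrightarrow> P) \<Longrightarrow>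
      (\<And>a. edgeG D x a \<Longrightarrow> is_and a \<Longrightarrow> v = a \<or> v = kid0 D a \<or> v = kid1 D a \<Longrightarrow> P) \<Longrightarrow> P" for v P
    unfolding new_G_def by blast
  have xt: "edgeG D x (termch x)" using or_termch_edge[OF n xN xo] .
  have G1: "?G \<subseteq> nodes D"
  proof
    fix v assume "v \<in> ?G"
    then consider "v \<in> Gp st" | "v = termch x" | a where "edgeG D x a" "is_and a" "v = a \<or> v = kid0 D a \<or> v = kid1 D a"
      by (rule Gcases)
    then show "v \<in> nodes D"
    proof cases
      case 1 then show ?thesis using InvD(1)[OF inv] by blast
    next
      case 2 then show ?thesis using edgeG_nodes[OF xt] by simp
    next
      case 3 then show ?thesis using edgeG_nodes edgeG_and_kids[OF 3(1,2)] by blast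
    qed
  qed
  have GpG: "Gp st \<subseteq> ?G" unfolding new_G_def by blast
  have G5: "kid0 D b \<in> ?G \<and> kid1 D b \<in> ?G" if bh: "b \<in> ?G" "is_and b" for b
  proof -
    consider "b \<in> Gp st" | "b = termch x" | a where "edgeG D x a" "is_and a" "b = a \<or> b = kid0 D a \<or> b = kid1 D a"
      by (rule Gcases[OF bh(1)])
    then show ?thesis
    proof cases
      case 1 then show ?thesis using InvD(6)[OF inv 1 bh(2)] GpG by blast
    next
      case 2 then show ?thesis using bh(2) termch_not_and[OF xo] by simp
    next
      case 3
      have "is_or (kid0 D a)" "is_or (kid1 D a)" using and_kids_or[OF 3(2)] by auto
      then have "b = a" using 3(3) and_not_or[OF bh(2)] by auto
      then have "kid0 D b \<in> ?G" "kid1 D b \<in> ?G" using 3(1,2) unfolding new_G_def by blast+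
      then show ?thesis by blast
    qed
  qed
  have G6: "parN c \<in> ?E" if ch: "c \<in> ?G" "\<not> is_or c" for c
  proof -
    consider "c \<in> Gp st" | "c = termch x" | a where "edgeG D x a" "is_and a" "c = a \<or> c = kid0 D a \<or> c = kid1 D a"
      by (rule Gcases[OF ch(1)])
    then show ?thesis
    proof cases
      case 1 then show ?thesis using InvD(7)[OF inv 1 ch(2)] by blast
    next
      case 2 then show ?thesis using termch_not_and[OF xo] by simp
    next
      case 3
      have "is_or (kid0 D a)" "is_or (kid1 D a)" using and_kids_or[OF 3(2)] by auto
      then have "c = a" using 3(3) ch(2) by auto
      then have "parN c = x" using gedge_nonor_target[of D x a] 3(1) ch(2) by (simp add: edgeG_def)
      then show ?thesis by simp
    qed
  qed
  have EG: "?E \<subseteq> ?G" using InvD(3)[OF inv] xG GpG by blast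
  have Eor: "is_or w" if "w \<in> ?E" for w using that InvD(4)[OF inv] xo by blast
  have par: "parents D ?G u \<subseteq> ?E" for u
  proof
    fix p assume "p \<in> parents D ?G u"
    then obtain b where b: "b \<in> ?G" "is_and b" "edgeG D p b" unfolding parents_def by blast
    have nb: "\<not> is_or b" using b(2) by (cases b) auto
    have "p = parN b" using gedge_nonor_target[of D p b] b(3) nb by (simp add: edgeG_def)
    then show "p \<in> ?E" using G6[OF b(1) nb] by simp
  qed
  have andch_same: "andch D ?G w = andch D (Gp st) w" if wx: "w \<noteq> x" for w
  proof
    show "andch D (Gp st) w \<subseteq> andch D ?G w" using GpG by (auto simp: andch_def)
  next
    show "andch D ?G w \<subseteq> andch D (Gp st) w"
    proof
      fix b assume bA: "b \<in> andch D ?G w"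
      then have b: "b \<in> ?G" "is_and b" "edgeG D w b" by (auto simp: andch_def)
      have nb: "\<not> is_or b" using b(2) by (cases b) auto
      have wp: "w = parN b" using gedge_nonor_target[of D w b] b(3) nb by (simp add: edgeG_def)
      have "b \<in> Gp st"
      proof (rule ccontr)
        assume nG: "b \<notin> Gp st"
        have "b = termch x \<or> (\<exists>a. edgeG D x a \<and> is_and a \<and> (b = a \<or> b = kid0 D a \<or> b = kid1 D a))"
          using b(1) nG unfolding new_G_def by blast
        then consider "b = termch x" | a where "edgeG D x a" "is_and a" "b = a \<or> b = kid0 D a \<or> b = kid1 D a"
          by blast
        then show False
        proof cases
          case 1 then show ?thesis using b(2) termch_not_and[OF xo] by simp
        next
          case 2
          have "is_or (kid0 D a)" "is_or (kid1 D a)" using and_kids_or[OF 2(2)] by auto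
          then have "b = a" using 2(3) nb by auto
          then have "x = parN b" using gedge_nonor_target[of D x a] 2(1) nb by (simp add: edgeG_def)
          then show False using wp wx by simp
        qed
      qed
      then show "b \<in> andch D (Gp st) w" using b by (simp add: andch_def)
    qed
  qed
  have PI0: "PI D ?G ?E {x} (UB st)"
    unfolding PI_def
  proof (intro conjI allI ballI impI)
    show "{x} \<subseteq> ?E" by simp
  next
    fix w assume "w \<notin> ?E"
    then show "UB st w = \<infinity>" using InvD(8)[OF inv] by blast
  next
    fix w assume wE: "w \<in> ?E"
    show "val D ?G (UB st) w \<le> UB st w"
    proof (cases "w = x")
      case True then show ?thesis using InvD(8)[OF inv xn] by simp
    next
      case False
      then have "w \<in> Ex st" using wE by simp
      then show ?thesis using InvD(9)[OF inv] andch_same[OF False] by (simp add: val_def)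
    qed
  next
    fix w assume wE: "w \<in> ?E" and "w \<notin> {x}"
    then have "w \<in> Ex st" "w \<noteq> x" by auto
    then show "UB st w = val D ?G (UB st) w" using InvD(9)[OF inv] andch_same by (simp add: val_def)
  qed
  have "PI D ?G ?E (fst ({} :: node set, UB2)) (snd ({} :: node set, UB2))"
    by (rule prop_star_PI[OF _ _ EG Eor par]) (use pU PI0 in \<open>auto simp: propagate_def\<close>)
  then have PIf: "PI D ?G ?E {} UB2" by simp
  have I7: "\<forall>w. w \<notin> ?E \<longrightarrow> UB2 w = \<infinity>" and I8: "\<forall>u\<in>?E. UB2 u = val D ?G UB2 u"
    using PIf unfolding PI_def by auto
  have I4: "\<forall>u\<in>?E. is_or u \<and> termch u \<in> ?G"
  proof
    fix u assume "u \<in> ?E"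
    then show "is_or u \<and> termch u \<in> ?G"
      using InvD(4,5)[OF inv] xo GpG unfolding new_G_def by blast
  qed
  have "Inv D st'"
    unfolding Inv_def st'd
    using G1 GpG InvD(2)[OF inv] EG I4 G5 G6 I7 I8 by simp blast
  moreover have "root D \<in> Ex st'"
  proof (cases "root D \<in> Ex st")
    case True then show ?thesis using st'd by simp
  next
    case False then show ?thesis using descend_notin[OF ds False] st'd by simp
  qed
  ultimately show ?thesis by blast
qed

lemma run_Inv: "0 < nN D \<Longrightarrow> (mt_iter D)\<^sup>*\<^sup>* (mt_init D) s \<Longrightarrow> Inv D s"
proof -
  assume n: "0 < nN D" and r: "(mt_iter D)\<^sup>*\<^sup>* (mt_init D) s"
  from r show "Inv D s"
  proof (induction rule: rtranclp_induct)
    case base then show ?case by (rule Inv_init)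
  next
    case (step y z) then show ?case using iter_Inv[OF n] by blast
  qed
qed


lemma last_step_root:
  assumes n: "0 < nN D" and r: "(mt_iter D)\<^sup>+\<^sup>+ (mt_init D) st"
  shows "Inv D st \<and> root D \<in> Ex st"
  using r
proof (cases rule: tranclp.cases)
  case r_into_trancl
  then show ?thesis using iter_Inv[OF n Inv_init] by blast
next
  case (trancl_into_trancl b)
  have "Inv D b" using run_Inv[OF n tranclp_into_rtranclp[OF trancl_into_trancl(1)]] .
  then show ?thesis using iter_Inv[OF n _ trancl_into_trancl(2)] by blast
qed

theorem theorem12:
  fixes N F :: nat and X :: "nat \<Rightarrow> nat \<Rightarrow> bool" and Y :: "nat \<Rightarrow> bool"
    and r1 r0 a b :: real and st :: mt_state and ch :: "node \<Rightarrow> node"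
  defines "D \<equiv> \<lparr>nN = N, fF = F, xX = X, yY = Y, rho1 = r1, rho0 = r0, alpha = a, beta = b\<rparr>"
  assumes "0 < N" and "0 < r1" and "0 < r0" and "0 < a" and "a < 1" and "0 \<le> b"
    and run: "(mt_iter D)\<^sup>+\<^sup>+ (mt_init D) st"
    and early: "LB st (root D) < UB st (root D)"
    and choice: "good_choice D st ch"
  shows "(\<exists>S. getsol D st ch (root D) S) \<and>
         (\<forall>S. getsol D st ch (root D) S \<longrightarrow>
            sol_graph D S \<and> S \<subseteq> Gp st \<and>
            (\<forall>S'. sol_graph D S' \<and> S' \<subseteq> Gp st \<longrightarrow> sol_cost D S \<le> sol_cost D S'))"
proof -
  have n: "0 < nN D" using assms(2) by (simp add: D_def)
  have ir: "Inv D st \<and> root D \<in> Ex st" using last_step_root[OF n run] .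
  have inv: "Inv D st" and rE: "root D \<in> Ex st" using ir by auto
  have ro: "is_or (root D)" by (simp add: root_def)
  have ex: "\<exists>S. getsol D st ch (root D) S" using getsol_ex[OF n inv choice rE] .
  have main: "sol_graph D S \<and> S \<subseteq> Gp st \<and>
      (\<forall>S'. sol_graph D S' \<and> S' \<subseteq> Gp st \<longrightarrow> sol_cost D S \<le> sol_cost D S')"
    if gs: "getsol D st ch (root D) S" for S
  proof -
    have ok: "sol_at D (Gp st) (root D) S \<and> sol_cost D S \<le> UB st (root D)"
      using getsol_ok[OF n inv choice gs rE] .
    have sa: "sol_at D (Gp st) (root D) S" and le: "sol_cost D S \<le> UB st (root D)" using ok by auto
    have sg: "sol_graph D S"
      unfolding sol_graph_def
    proof (intro conjI ballI impI allI)
      show "root D \<in> S" using sol_at_in[OF sa] .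
      show "S \<subseteq> nodes D" using sol_at_nodes[OF sa] .
    next
      fix v assume "v \<in> S"
      then show "(\<lambda>x y. edgeG D x y \<and> x \<in> S \<and> y \<in> S)\<^sup>*\<^sup>* (root D) v" by (rule sol_at_reach[OF sa])
    next
      fix c v assume "c \<in> S" "is_and c" "edgeG D c v"
      then show "v \<in> S" by (rule sol_at_and[OF sa])
    next
      fix w assume "w \<in> S" "is_or w"
      then show "\<exists>!v. edgeG D w v \<and> v \<in> S" by (rule sol_at_or[OF sa])
    qed
    have lb: "sol_cost D S \<le> sol_cost D S'" if h: "sol_graph D S' \<and> S' \<subseteq> Gp st" for S'
    proof -
      have sg': "sol_graph D S'" and sub': "S' \<subseteq> Gp st" using h by auto
      have sa': "sol_at D (Gp st) (root D) S'"
      proof (rule sol_atI)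
        show "root D \<in> S'" "S' \<subseteq> nodes D" using sg' unfolding sol_graph_def by auto
        show "S' \<subseteq> Gp st" by (rule sub')
      next
        fix v assume "v \<in> S'"
        then show "(\<lambda>x y. edgeG D x y \<and> x \<in> S' \<and> y \<in> S')\<^sup>*\<^sup>* (root D) v"
          using sg' unfolding sol_graph_def by blast
      next
        fix c v assume "c \<in> S'" "is_and c" "edgeG D c v"
        then show "v \<in> S'" using sg' unfolding sol_graph_def by blast
      next
        fix w assume "w \<in> S'" "is_or w"
        then show "\<exists>!v. edgeG D w v \<and> v \<in> S'" using sg' unfolding sol_graph_def by blast
      qed
      have "UB st (root D) \<le> sol_cost D S'" using lower[OF n inv sa' ro] .
      then show ?thesis using le by simp
    qed
    show ?thesis using sg sol_at_subG[OF sa] lb by blast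
  qed
  show ?thesis using ex main by blast
qed

end
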